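(* Assume Second-order Absolute Morley. Then for every lightface projective set $A\subseteq 2^\omega$, either $|A|\leq\aleph_1$ or $A$ contains a perfect set.
   Context: Second-order Absolute Morley is the statement: for every second-order theory $T$ in a countable signature, either $T$ has at most $\aleph_1$ isomorphism classes of countable models, or there is a perfect set of pairwise non-isomorphic countable models of $T$. Here countable models with universe $\omega$ are identified with points of a Cantor space via the values of their relations (product topology), so "perfect set of models" means a nonempty closed set without isolated points in this space of codes; equivalently a continuous injection of $2^\omega$ into the space of models of $T$ whose images are pairwise non-isomorphic. A set $A\subseteq 2^\omega$ is lightface projective if it is definable over second-order arithmetic by a projective formula without real parameters. A perfect set is a nonempty closed subset of $2^\omega$ without isolated points. *)

theory Defs
  imports "HOL-Analysis.Analysis"
begin

datatype sof =
    Eq nat nat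
  | Rel nat "nat list"
  | RVar nat "nat list"
  | Neg sof
  | Conj sof sof
  | Ex nat sof
  | ExR nat nat sof

text \<open>A structure with universe omega, coded by the values of its relations:
 a point of the Cantor space (nat * nat list) => bool.\<close>
type_synonym code = "nat \<times> nat list \<Rightarrow> bool"

fun sat :: "code \<Rightarrow> (nat \<Rightarrow> nat) \<Rightarrow> (nat \<Rightarrow> nat list \<Rightarrow> bool) \<Rightarrow> sof \<Rightarrow> bool" where
  "sat M v V (Eq i j) = (v i = v j)"
| "sat M v V (Rel R is) = M (R, map v is)"
| "sat M v V (RVar X is) = V X (map v is)"
| "sat M v V (Neg \<phi>) = (\<not> sat M v V \<phi>)"
| "sat M v V (Conj \<phi> \<psi>) = (sat M v V \<phi> \<and> sat M v V \<psi>)"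
| "sat M v V (Ex i \<phi>) = (\<exists>a. sat M (v(i := a)) V \<phi>)"
| "sat M v V (ExR X n \<phi>) =
     (\<exists>P. (\<forall>xs. P xs \<longrightarrow> length xs = n) \<and> sat M v (V(X := P)) \<phi>)"

fun fvars :: "sof \<Rightarrow> nat set" where
  "fvars (Eq i j) = {i, j}"
| "fvars (Rel R is) = set is"
| "fvars (RVar X is) = set is"
| "fvars (Neg \<phi>) = fvars \<phi>"
| "fvars (Conj \<phi> \<psi>) = fvars \<phi> \<union> fvars \<psi>"
| "fvars (Ex i \<phi>) = fvars \<phi> - {i}"
| "fvars (ExR X n \<phi>) = fvars \<phi>"

fun frvars :: "sof \<Rightarrow> nat set" where
  "frvars (Eq i j) = {}"
| "frvars (Rel R is) = {}"
| "frvars (RVar X is) = {X}"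
| "frvars (Neg \<phi>) = frvars \<phi>"
| "frvars (Conj \<phi> \<psi>) = frvars \<phi> \<union> frvars \<psi>"
| "frvars (Ex i \<phi>) = frvars \<phi>"
| "frvars (ExR X n \<phi>) = frvars \<phi> - {X}"

definition sentence :: "sof \<Rightarrow> bool" where
  "sentence \<phi> \<longleftrightarrow> fvars \<phi> = {} \<and> frvars \<phi> = {}"

fun wf_sof :: "nat set \<Rightarrow> (nat \<Rightarrow> nat) \<Rightarrow> sof \<Rightarrow> bool" where
  "wf_sof \<sigma> ar (Eq i j) = True"
| "wf_sof \<sigma> ar (Rel R is) = (R \<in> \<sigma> \<and> length is = ar R)"
| "wf_sof \<sigma> ar (RVar X is) = True"
| "wf_sof \<sigma> ar (Neg \<phi>) = wf_sof \<sigma> ar \<phi>"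
| "wf_sof \<sigma> ar (Conj \<phi> \<psi>) = (wf_sof \<sigma> ar \<phi> \<and> wf_sof \<sigma> ar \<psi>)"
| "wf_sof \<sigma> ar (Ex i \<phi>) = wf_sof \<sigma> ar \<phi>"
| "wf_sof \<sigma> ar (ExR X n \<phi>) = wf_sof \<sigma> ar \<phi>"

text \<open>Satisfaction of a sentence (the assignment is irrelevant for sentences).\<close>
definition models :: "code \<Rightarrow> sof \<Rightarrow> bool" where
  "models M \<phi> \<longleftrightarrow> sat M (\<lambda>_. 0) (\<lambda>_ _. False) \<phi>"

definition second_order_theory :: "nat set \<Rightarrow> (nat \<Rightarrow> nat) \<Rightarrow> sof set \<Rightarrow> bool" where
  "second_order_theory \<sigma> ar T \<longleftrightarrow> (\<forall>\<phi>\<in>T. sentence \<phi> \<and> wf_sof \<sigma> ar \<phi>)"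

definition is_structure :: "nat set \<Rightarrow> (nat \<Rightarrow> nat) \<Rightarrow> code \<Rightarrow> bool" where
  "is_structure \<sigma> ar M \<longleftrightarrow> (\<forall>R xs. M (R, xs) \<longrightarrow> R \<in> \<sigma> \<and> length xs = ar R)"

definition Mods :: "nat set \<Rightarrow> (nat \<Rightarrow> nat) \<Rightarrow> sof set \<Rightarrow> code set" where
  "Mods \<sigma> ar T = {M. is_structure \<sigma> ar M \<and> (\<forall>\<phi>\<in>T. models M \<phi>)}"

definition iso :: "nat set \<Rightarrow> (nat \<Rightarrow> nat) \<Rightarrow> code \<Rightarrow> code \<Rightarrow> bool" where
  "iso \<sigma> ar M N \<longleftrightarrow> (\<exists>\<pi>::nat \<Rightarrow> nat. bij \<pi> \<and>
      (\<forall>R\<in>\<sigma>. \<forall>xs. length xs = ar R \<longrightarrow> (M (R, xs) \<longleftrightarrow> N (R, map \<pi> xs))))"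

definition iso_rel :: "nat set \<Rightarrow> (nat \<Rightarrow> nat) \<Rightarrow> code rel" where
  "iso_rel \<sigma> ar = {(M, N). iso \<sigma> ar M N}"

definition code_top :: "code topology" where
  "code_top = product_topology (\<lambda>_. discrete_topology (UNIV :: bool set)) UNIV"

definition code_space :: "nat set \<Rightarrow> (nat \<Rightarrow> nat) \<Rightarrow> code topology" where
  "code_space \<sigma> ar = subtopology code_top {M. is_structure \<sigma> ar M}"

definition cantor :: "(nat \<Rightarrow> bool) topology" where
  "cantor = product_topology (\<lambda>_. discrete_topology (UNIV :: bool set)) UNIV"

definition perfect_in :: "'a topology \<Rightarrow> 'a set \<Rightarrow> bool" where
  "perfect_in X P \<longleftrightarrow> P \<noteq> {} \<and> closedin X P \<and> P \<subseteq> X derived_set_of P"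

definition at_most_aleph1 :: "'a set \<Rightarrow> bool" where
  "at_most_aleph1 A \<longleftrightarrow> ordLeq3 (card_of A) (cardSuc natLeq)"

definition SO_Absolute_Morley :: bool where
  "SO_Absolute_Morley \<longleftrightarrow>
     (\<forall>(\<sigma>::nat set) (ar::nat \<Rightarrow> nat) (T::sof set). second_order_theory \<sigma> ar T \<longrightarrow>
        at_most_aleph1 (Mods \<sigma> ar T // iso_rel \<sigma> ar)
        \<or> (\<exists>P \<subseteq> Mods \<sigma> ar T. perfect_in (code_space \<sigma> ar) P \<and>
              (\<forall>M\<in>P. \<forall>N\<in>P. M \<noteq> N \<longrightarrow> \<not> iso \<sigma> ar M N)))"

text \<open>Second-order arithmetic as the standard structure on omega: symbol 0 is the graph
 of addition, symbol 1 the graph of multiplication, and symbol 2 a unary predicate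
 interpreting the real x (the free set variable of the defining formula).  A lightface
 projective formula is a parameter-free second-order formula over this structure.\<close>
definition arith_sig :: "nat set" where "arith_sig = {0, 1, 2}"

definition arith_ar :: "nat \<Rightarrow> nat" where
  "arith_ar R = (if R = 2 then 1 else 3)"

fun arith_struct :: "(nat \<Rightarrow> bool) \<Rightarrow> code" where
  "arith_struct x (R, xs) =
     (if R = 0 then (case xs of [a, b, c] \<Rightarrow> a + b = c | _ \<Rightarrow> False)
      else if R = 1 then (case xs of [a, b, c] \<Rightarrow> a * b = c | _ \<Rightarrow> False)
      else if R = 2 then (case xs of [a] \<Rightarrow> x a | _ \<Rightarrow> False)
      else False)"

definition lightface_projective :: "(nat \<Rightarrow> bool) set \<Rightarrow> bool" where
  "lightface_projective A \<longleftrightarrow>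
     (\<exists>\<phi>. sentence \<phi> \<and> wf_sof arith_sig arith_ar \<phi> \<and> A = {x. models (arith_struct x) \<phi>})"

end

theory Submission imports Defs begin

lemma sat_fv:
  "(\<And>i. i \<in> fvars \<phi> \<Longrightarrow> v i = w i) \<Longrightarrow> sat M v V \<phi> = sat M w V \<phi>"
proof (induction \<phi> arbitrary: v w V)
  case (Ex i \<phi>)
  have "\<And>a. sat M (v(i:=a)) V \<phi> = sat M (w(i:=a)) V \<phi>"
    by (rule Ex.IH) (use Ex.prems in auto)
  then show ?case by simp
next
  case (Rel R js)
  then have "map v js = map w js" by auto
  then show ?case by (simp only: sat.simps)
next
  case (RVar X js)
  then have "map v js = map w js" by auto
  then show ?case by (simp only: sat.simps)
next
  case (Eq i j)
  then show ?case by simp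
next
  case (Neg \<phi>)
  have "sat M v V \<phi> = sat M w V \<phi>" by (rule Neg.IH) (use Neg.prems in simp)
  then show ?case by simp
next
  case (Conj \<phi> \<psi>)
  have "sat M v V \<phi> = sat M w V \<phi>" by (rule Conj.IH(1)) (use Conj.prems in simp)
  moreover have "sat M v V \<psi> = sat M w V \<psi>" by (rule Conj.IH(2)) (use Conj.prems in simp)
  ultimately show ?case by simp
next
  case (ExR X n \<phi>)
  have "\<And>V'. sat M v V' \<phi> = sat M w V' \<phi>" by (rule ExR.IH) (use ExR.prems in simp)
  then show ?case by simp
qed

lemma sat_iso:
  assumes b: "bij \<pi>"
    and h: "\<And>R xs. R \<in> \<sigma> \<Longrightarrow> length xs = ar R \<Longrightarrow> M (R, xs) = N (R, map \<pi> xs)"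
    and wf: "wf_sof \<sigma> ar \<phi>"
  shows "sat M v V \<phi> = sat N (\<pi> \<circ> v) (\<lambda>X ys. V X (map (inv \<pi>) ys)) \<phi>"
  using wf
proof (induction \<phi> arbitrary: v V)
  case (Rel R js)
  then show ?case using h[of R "map v js"] by (simp add: comp_def)
next
  case (RVar X js)
  have "map (inv \<pi>) (map (\<pi> \<circ> v) js) = map v js"
    using b by (simp add: comp_def bij_is_inj)
  then show ?case by (simp only: sat.simps)
next
  case (Ex i \<phi>)
  have e: "\<And>a. \<pi> \<circ> v(i := a) = (\<pi> \<circ> v)(i := \<pi> a)" by auto
  have "(\<exists>a. sat M (v(i := a)) V \<phi>) = (\<exists>b. sat N ((\<pi> \<circ> v)(i := b)) (\<lambda>X ys. V X (map (inv \<pi>) ys)) \<phi>)"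
  proof
    assume "\<exists>a. sat M (v(i := a)) V \<phi>"
    then obtain a where a: "sat M (v(i := a)) V \<phi>" by blast
    have "sat N (\<pi> \<circ> v(i := a)) (\<lambda>X ys. V X (map (inv \<pi>) ys)) \<phi>"
      using Ex.IH[of "v(i:=a)" V] Ex.prems a by (simp only: wf_sof.simps)
    then show "\<exists>b. sat N ((\<pi> \<circ> v)(i := b)) (\<lambda>X ys. V X (map (inv \<pi>) ys)) \<phi>"
      unfolding e by blast
  next
    assume "\<exists>b. sat N ((\<pi> \<circ> v)(i := b)) (\<lambda>X ys. V X (map (inv \<pi>) ys)) \<phi>"
    then obtain b where bb: "sat N ((\<pi> \<circ> v)(i := b)) (\<lambda>X ys. V X (map (inv \<pi>) ys)) \<phi>" by blast
    have "b = \<pi> (inv \<pi> b)" using surj_f_inv_f[OF bij_is_surj[OF b]] by simp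
    then have "sat N (\<pi> \<circ> v(i := inv \<pi> b)) (\<lambda>X ys. V X (map (inv \<pi>) ys)) \<phi>"
      using bb unfolding e by metis
    then have "sat M (v(i := inv \<pi> b)) V \<phi>"
      using Ex.IH[of "v(i:=inv \<pi> b)" V] Ex.prems by (simp only: wf_sof.simps)
    then show "\<exists>a. sat M (v(i := a)) V \<phi>" by blast
  qed
  then show ?case by (simp only: sat.simps)
next
  case (ExR X n \<phi>)
  let ?V' = "\<lambda>X ys. V X (map (inv \<pi>) ys)"
  have upd: "\<And>P. (\<lambda>Y ys. (V(X:=P)) Y (map (inv \<pi>) ys)) = ?V'(X := (\<lambda>ys. P (map (inv \<pi>) ys)))"
    by (auto simp: fun_eq_iff)
  have "(\<exists>P. (\<forall>xs. P xs \<longrightarrow> length xs = n) \<and> sat M v (V(X := P)) \<phi>) =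
        (\<exists>P. (\<forall>xs. P xs \<longrightarrow> length xs = n) \<and> sat N (\<pi> \<circ> v) (?V'(X := P)) \<phi>)"
  proof
    assume "\<exists>P. (\<forall>xs. P xs \<longrightarrow> length xs = n) \<and> sat M v (V(X := P)) \<phi>"
    then obtain P where P: "\<forall>xs. P xs \<longrightarrow> length xs = n" "sat M v (V(X := P)) \<phi>" by blast
    have "sat N (\<pi> \<circ> v) (\<lambda>Y ys. (V(X:=P)) Y (map (inv \<pi>) ys)) \<phi>"
      using ExR.IH[of v "V(X:=P)"] ExR.prems P(2) by (simp only: wf_sof.simps)
    then have "sat N (\<pi> \<circ> v) (?V'(X:= (\<lambda>ys. P (map (inv \<pi>) ys)))) \<phi>" unfolding upd .
    moreover have "\<forall>xs. (\<lambda>ys. P (map (inv \<pi>) ys)) xs \<longrightarrow> length xs = n"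
    proof (intro allI impI)
      fix xs assume "(\<lambda>ys. P (map (inv \<pi>) ys)) xs"
      then have "length (map (inv \<pi>) xs) = n" using P(1) by blast
      then show "length xs = n" by simp
    qed
    ultimately show "\<exists>P. (\<forall>xs. P xs \<longrightarrow> length xs = n) \<and> sat N (\<pi> \<circ> v) (?V'(X := P)) \<phi>"
      by (intro exI[of _ "\<lambda>ys. P (map (inv \<pi>) ys)"] conjI)
  next
    assume "\<exists>P. (\<forall>xs. P xs \<longrightarrow> length xs = n) \<and> sat N (\<pi> \<circ> v) (?V'(X := P)) \<phi>"
    then obtain P where P: "\<forall>xs. P xs \<longrightarrow> length xs = n" "sat N (\<pi> \<circ> v) (?V'(X := P)) \<phi>" by blast
    have PP: "(\<lambda>ys. (\<lambda>xs. P (map \<pi> xs)) (map (inv \<pi>) ys)) = P"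
      using b by (simp add: map_map comp_def bij_is_surj surj_f_inv_f)
    have "sat N (\<pi> \<circ> v) (?V'(X:= (\<lambda>ys. (\<lambda>xs. P (map \<pi> xs)) (map (inv \<pi>) ys)))) \<phi>"
      unfolding PP by (rule P(2))
    then have "sat N (\<pi> \<circ> v) (\<lambda>Y ys. (V(X:=(\<lambda>xs. P (map \<pi> xs)))) Y (map (inv \<pi>) ys)) \<phi>"
      unfolding upd .
    then have "sat M v (V(X:=(\<lambda>xs. P (map \<pi> xs)))) \<phi>"
      using ExR.IH[of v "V(X:=(\<lambda>xs. P (map \<pi> xs)))"] ExR.prems by (simp only: wf_sof.simps)
    moreover have "\<forall>xs. (\<lambda>xs. P (map \<pi> xs)) xs \<longrightarrow> length xs = n"
    proof (intro allI impI)
      fix xs assume "(\<lambda>xs. P (map \<pi> xs)) xs"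
      then have "length (map \<pi> xs) = n" using P(1) by blast
      then show "length xs = n" by simp
    qed
    ultimately show "\<exists>P. (\<forall>xs. P xs \<longrightarrow> length xs = n) \<and> sat M v (V(X := P)) \<phi>"
      by (intro exI[of _ "\<lambda>xs. P (map \<pi> xs)"] conjI)
  qed
  then show ?case by (simp only: sat.simps)
next
  case (Eq i j)
  then show ?case using b by (simp add: bij_is_inj inj_eq)
next
  case (Neg \<phi>)
  then show ?case by simp
next
  case (Conj \<phi> \<psi>)
  then show ?case by simp
qed

lemma models_iso:
  assumes b: "bij \<pi>"
    and h: "\<And>R xs. R \<in> \<sigma> \<Longrightarrow> length xs = ar R \<Longrightarrow> M (R, xs) = N (R, map \<pi> xs)"
    and wf: "wf_sof \<sigma> ar \<phi>" and s: "sentence \<phi>"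
  shows "models M \<phi> = models N \<phi>"
proof -
  have "models M \<phi> = sat N (\<pi> \<circ> (\<lambda>_. 0)) (\<lambda>X ys. False) \<phi>"
    unfolding models_def using sat_iso[of \<pi> \<sigma> ar M N \<phi>] b h wf by simp
  also have "\<dots> = models N \<phi>"
    unfolding models_def by (rule sat_fv) (use s in \<open>auto simp: sentence_def\<close>)
  finally show ?thesis .
qed


section \<open>Arithmetic categoricity\<close>

definition FAll :: "nat \<Rightarrow> sof \<Rightarrow> sof" where "FAll i \<phi> = Neg (Ex i (Neg \<phi>))"
definition FImp :: "sof \<Rightarrow> sof \<Rightarrow> sof" where "FImp a b = Neg (Conj a (Neg b))"

lemma sat_FAll[simp]: "sat M v V (FAll i \<phi>) = (\<forall>a. sat M (v(i:=a)) V \<phi>)"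
  by (simp add: FAll_def)
lemma sat_FImp[simp]: "sat M v V (FImp a b) = (sat M v V a \<longrightarrow> sat M v V b)"
  by (simp add: FImp_def)

definition funct :: "nat \<Rightarrow> sof" where
  "funct k = FAll 0 (FAll 1 (Ex 2 (Conj (Rel k [0,1,2]) (FAll 3 (FImp (Rel k [0,1,3]) (Eq 3 2))))))"

definition theta_body :: sof where
  "theta_body =
    Conj (FAll 0 (Conj (Rel 0 [0,10,0]) (Rel 1 [0,10,10])))
   (Conj (FAll 0 (FAll 1 (FAll 2 (FAll 3 (FAll 4 (FImp (Conj (Rel 0 [0,1,2]) (Conj (Rel 0 [1,11,3]) (Rel 0 [2,11,4]))) (Rel 0 [0,3,4])))))))
   (Conj (FAll 0 (FAll 1 (FAll 2 (FAll 3 (FAll 4 (FImp (Conj (Rel 1 [0,1,2]) (Conj (Rel 0 [1,11,3]) (Rel 0 [2,0,4]))) (Rel 1 [0,3,4])))))))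
   (Conj (FAll 0 (FAll 1 (FImp (Rel 0 [0,11,1]) (Neg (Eq 1 10)))))
   (Conj (FAll 0 (FAll 1 (FAll 2 (FImp (Conj (Rel 0 [0,11,2]) (Rel 0 [1,11,2])) (Eq 0 1)))))
    (Neg (ExR 0 1 (Neg (FImp (Conj (RVar 0 [10]) (FAll 0 (FAll 1 (FImp (Conj (RVar 0 [0]) (Rel 0 [0,11,1])) (RVar 0 [1])))))
        (FAll 0 (RVar 0 [0]))))))))))"

definition theta :: sof where
  "theta = Conj (funct 0) (Conj (funct 1) (Ex 10 (Ex 11 theta_body)))"

lemma theta_sentence: "sentence theta"
  by (simp add: sentence_def theta_def theta_body_def funct_def FAll_def FImp_def) auto

lemma theta_wf: "wf_sof arith_sig arith_ar theta"
  by (simp add: theta_def theta_body_def funct_def FAll_def FImp_def arith_sig_def arith_ar_def)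

lemma theta_D:
  assumes "models M theta"
  shows "(\<forall>a b. \<exists>c. M (0,[a,b,c]) \<and> (\<forall>d. M (0,[a,b,d]) \<longrightarrow> d = c))
    \<and> (\<forall>a b. \<exists>c. M (1,[a,b,c]) \<and> (\<forall>d. M (1,[a,b,d]) \<longrightarrow> d = c))
    \<and> (\<exists>z u. (\<forall>a. M (0,[a,z,a]) \<and> M (1,[a,z,z]))
       \<and> (\<forall>a b c d e. M (0,[a,b,c]) \<and> M (0,[b,u,d]) \<and> M (0,[c,u,e]) \<longrightarrow> M (0,[a,d,e]))
       \<and> (\<forall>a b c d e. M (1,[a,b,c]) \<and> M (0,[b,u,d]) \<and> M (0,[c,a,e]) \<longrightarrow> M (1,[a,d,e]))
       \<and> (\<forall>a b. M (0,[a,u,b]) \<longrightarrow> b \<noteq> z)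
       \<and> (\<forall>a b. (\<exists>c. M (0,[a,u,c]) \<and> M (0,[b,u,c])) \<longrightarrow> a = b)
       \<and> (\<forall>P. P [z] \<longrightarrow> (\<exists>xs. P xs \<and> length xs \<noteq> Suc 0) \<or> (\<exists>a. P [a] \<and> (\<exists>b. M (0,[a,u,b]) \<and> \<not> P [b])) \<or> (\<forall>a. P [a])))"
  using assms by (simp add: models_def theta_def theta_body_def funct_def)


definition transM :: "code \<Rightarrow> (nat \<Rightarrow> nat) \<Rightarrow> bool" where
  "transM M e \<longleftrightarrow> bij e \<and> (\<forall>a b c. M (0,[e a,e b,e c]) = (a+b=c)) \<and> (\<forall>a b c. M (1,[e a,e b,e c]) = (a*b=c))"

lemma cat:
  assumes F0: "\<forall>a b. \<exists>c. M (0,[a,b,c]) \<and> (\<forall>d. M (0,[a,b,d]) \<longrightarrow> d = c)"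
    and F1: "\<forall>a b. \<exists>c. M (1,[a,b,c]) \<and> (\<forall>d. M (1,[a,b,d]) \<longrightarrow> d = c)"
    and B1: "\<forall>a. M (0,[a,z,a]) \<and> M (1,[a,z,z])"
    and B2: "\<forall>a b c d e. M (0,[a,b,c]) \<and> M (0,[b,u,d]) \<and> M (0,[c,u,e]) \<longrightarrow> M (0,[a,d,e])"
    and B3: "\<forall>a b c d e. M (1,[a,b,c]) \<and> M (0,[b,u,d]) \<and> M (0,[c,a,e]) \<longrightarrow> M (1,[a,d,e])"
    and B4: "\<forall>a b. M (0,[a,u,b]) \<longrightarrow> b \<noteq> z"
    and B5: "\<forall>a b. (\<exists>c. M (0,[a,u,c]) \<and> M (0,[b,u,c])) \<longrightarrow> a = b"
    and B6: "\<forall>P. P [z] \<longrightarrow> (\<exists>xs. P xs \<and> length xs \<noteq> Suc 0) \<or> (\<exists>a. P [a] \<and> (\<exists>b. M (0,[a,u,b]) \<and> \<not> P [b])) \<or> (\<forall>a. P [a])"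
  shows "\<exists>e. transM M e"
proof -
  define add where "add a b = (THE c. M (0,[a,b,c]))" for a b
  define mul where "mul a b = (THE c. M (1,[a,b,c]))" for a b
  have addT: "M (0,[a,b,add a b])" and addD: "M (0,[a,b,c]) \<Longrightarrow> add a b = c" for a b c
  proof -
    obtain c0 where c0: "M (0,[a,b,c0])" "\<forall>d. M (0,[a,b,d]) \<longrightarrow> d = c0" using F0 by blast
    have "add a b = c0" unfolding add_def by (rule the_equality) (use c0 in blast)+
    then show "M (0,[a,b,add a b])" using c0(1) by simp
    show "M (0,[a,b,c]) \<Longrightarrow> add a b = c" using c0(2) \<open>add a b = c0\<close> by metis
  qed
  have mulT: "M (1,[a,b,mul a b])" and mulD: "M (1,[a,b,c]) \<Longrightarrow> mul a b = c" for a b c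
  proof -
    obtain c0 where c0: "M (1,[a,b,c0])" "\<forall>d. M (1,[a,b,d]) \<longrightarrow> d = c0" using F1 by blast
    have "mul a b = c0" unfolding mul_def by (rule the_equality) (use c0 in blast)+
    then show "M (1,[a,b,mul a b])" using c0(1) by simp
    show "M (1,[a,b,c]) \<Longrightarrow> mul a b = c" using c0(2) \<open>mul a b = c0\<close> by metis
  qed
  have a0: "add a z = a" for a by (rule addD) (use B1 in blast)
  have m0: "mul a z = z" for a by (rule mulD) (use B1 in blast)
  have a2: "add a (add b u) = add (add a b) u" for a b
    by (rule addD, rule B2[rule_format, of a b "add a b" "add b u" "add (add a b) u"]) (intro conjI addT)
  have m2: "mul a (add b u) = add (mul a b) a" for a b
    by (rule mulD, rule B3[rule_format, of a b "mul a b" "add b u" "add (mul a b) a"]) (intro conjI addT mulT)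
  have b4: "add a u \<noteq> z" for a using B4[rule_format, OF addT[of a u]] .
  have b5: "add a u = add b u \<Longrightarrow> a = b" for a b
  proof -
    assume h: "add a u = add b u"
    have "M (0,[a,u,add a u]) \<and> M (0,[b,u,add a u])" using addT[of a u] addT[of b u] h by simp
    then show "a = b" using B5 by blast
  qed
  define e where "e n = ((\<lambda>a. add a u) ^^ n) z" for n
  have e0: "e 0 = z" by (simp add: e_def)
  have eS: "e (Suc n) = add (e n) u" for n by (simp add: e_def)
  have einj: "e m = e n \<Longrightarrow> m = n" for m n
  proof (induction m arbitrary: n)
    case 0
    show ?case
    proof (cases n)
      case (Suc k)
      then have "e n = add (e k) u" using eS by simp
      then show ?thesis using 0 e0 b4[of "e k"] by simp
    qed simp
  next
    case (Suc m)
    show ?case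
    proof (cases n)
      case 0
      then show ?thesis using Suc.prems e0 eS[of m] b4[of "e m"] by simp
    next
      case (Suc k)
      then have "add (e m) u = add (e k) u" using Suc.prems eS by simp
      then have "e m = e k" by (rule b5)
      then have "m = k" by (rule Suc.IH)
      then show ?thesis using Suc by simp
    qed
  qed
  have esurj: "a \<in> range e" for a
  proof -
    let ?P = "\<lambda>xs. \<exists>a. xs = [a] \<and> a \<in> range e"
    have h0: "?P [z]" using e0 by auto
    have h1: "\<not> (\<exists>xs. ?P xs \<and> length xs \<noteq> Suc 0)" by auto
    have h2: "\<not> (\<exists>a. ?P [a] \<and> (\<exists>b. M (0,[a,u,b]) \<and> \<not> ?P [b]))"
    proof
      assume "\<exists>a. ?P [a] \<and> (\<exists>b. M (0,[a,u,b]) \<and> \<not> ?P [b])"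
      then obtain n b where "M (0,[e n,u,b])" "\<not> ?P [b]" by auto
      then have "b = e (Suc n)" using addD[of "e n" u b] eS[of n] by simp
      then show False using \<open>\<not> ?P [b]\<close> by auto
    qed
    have d: "(\<exists>xs. ?P xs \<and> length xs \<noteq> Suc 0) \<or> (\<exists>a. ?P [a] \<and> (\<exists>b. M (0,[a,u,b]) \<and> \<not> ?P [b])) \<or> (\<forall>a. ?P [a])"
      by (rule mp[OF spec[OF B6, of ?P] h0])
    have "\<forall>a. ?P [a]" using d h1 h2 by (elim disjE) blast+
    then show ?thesis by auto
  qed
  have eadd: "e (m + n) = add (e m) (e n)" for m n
    by (induction n) (simp_all add: e0 eS a0 a2)
  have emul: "e (m * n) = mul (e m) (e n)" for m n
  proof (induction n)
    case 0 then show ?case by (simp add: e0 m0)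
  next
    case (Suc n)
    have "e (m * Suc n) = e (m * n + m)" by (simp add: add.commute)
    also have "\<dots> = add (mul (e m) (e n)) (e m)" using eadd Suc by simp
    also have "\<dots> = mul (e m) (e (Suc n))" using m2 eS by simp
    finally show ?case .
  qed
  have "inj e" using einj by (auto intro: injI)
  moreover have "surj e" using esurj by auto
  ultimately have "bij e" by (simp add: bij_def)
  moreover have "M (0,[e a,e b,e c]) = (a+b=c)" for a b c
  proof
    assume "M (0,[e a,e b,e c])"
    then have "e (a+b) = e c" using addD eadd by metis
    then show "a+b=c" using einj by blast
  next
    assume "a+b=c" then show "M (0,[e a,e b,e c])" using addT eadd by metis
  qed
  moreover have "M (1,[e a,e b,e c]) = (a*b=c)" for a b c
  proof
    assume "M (1,[e a,e b,e c])"
    then have "e (a*b) = e c" using mulD emul by metis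
    then show "a*b=c" using einj by blast
  next
    assume "a*b=c" then show "M (1,[e a,e b,e c])" using mulT emul by metis
  qed
  ultimately show ?thesis unfolding transM_def by blast
qed



lemma theta_trans: assumes m: "models M theta" shows "\<exists>e. transM M e"
  using theta_D[OF m] apply (elim conjE exE) by (rule cat) assumption+

definition zero :: "code \<Rightarrow> nat" where "zero M = (THE z. M (0,[z,z,z]))"
definition one :: "code \<Rightarrow> nat" where "one M = (THE u. M (1,[u,u,u]) \<and> \<not> M (0,[u,u,u]))"
definition succ :: "code \<Rightarrow> nat \<Rightarrow> nat" where "succ M a = (THE b. M (0,[a, one M, b]))"
definition enum :: "code \<Rightarrow> nat \<Rightarrow> nat" where "enum M n = (succ M ^^ n) (zero M)"
definition decode :: "code \<Rightarrow> nat \<Rightarrow> bool" where "decode M n = M (2,[enum M n])"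

lemma trans_ex: "transM N e \<Longrightarrow> \<exists>k. x = e k"
  unfolding transM_def by (metis bij_pointE)

lemma trans_zero: assumes t: "transM N e" shows "zero N = e 0"
  unfolding zero_def
proof (rule the_equality)
  show "N (0,[e 0,e 0,e 0])" using t by (simp add: transM_def)
  fix z assume "N (0,[z,z,z])"
  moreover obtain k where "z = e k" using trans_ex[OF t] by blast
  ultimately have "k + k = k" using t by (simp add: transM_def)
  then show "z = e 0" using \<open>z = e k\<close> by simp
qed

lemma trans_one: assumes t: "transM N e" shows "one N = e 1"
  unfolding one_def
proof (rule the_equality)
  show "N (1,[e 1,e 1,e 1]) \<and> \<not> N (0,[e 1,e 1,e 1])" using t by (simp add: transM_def)
  fix z assume "N (1,[z,z,z]) \<and> \<not> N (0,[z,z,z])"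
  moreover obtain k where "z = e k" using trans_ex[OF t] by blast
  ultimately have "k = 1" using t by (auto simp: transM_def)
  then show "z = e 1" using \<open>z = e k\<close> by simp
qed

lemma trans_succ: assumes t: "transM N e" shows "succ N (e k) = e (Suc k)"
  unfolding succ_def trans_one[OF t]
proof (rule the_equality)
  show "N (0,[e k, e 1, e (Suc k)])" using t by (simp add: transM_def)
  fix z assume "N (0,[e k, e 1, z])"
  moreover obtain j where "z = e j" using trans_ex[OF t] by blast
  ultimately have "k + 1 = j" using t by (simp add: transM_def)
  then show "z = e (Suc k)" using \<open>z = e j\<close> by simp
qed

lemma trans_enum: assumes t: "transM N e" shows "enum N = e"
proof
  fix n show "enum N n = e n"
    by (induction n) (simp_all add: enum_def trans_zero[OF t] trans_succ[OF t])
qed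

lemma arith_trans: "transM (arith_struct x) id"
  by (simp add: transM_def)

lemma decode_arith: "decode (arith_struct x) = x"
  by (simp add: fun_eq_iff decode_def trans_enum[OF arith_trans])

lemma arith_theta: "models (arith_struct x) theta"
proof -
  have ind: "(\<exists>b. P [b] \<and> \<not> P [b + 1]) \<or> (\<forall>a. P [a])" if "P [0]" for P :: "nat list \<Rightarrow> bool"
  proof (cases "\<exists>b. P [b] \<and> \<not> P [b + 1]")
    case False
    have "P [a]" for a by (induction a) (use that False in auto)
    then show ?thesis by blast
  qed blast
  show ?thesis
    apply (simp add: models_def theta_def theta_body_def funct_def)
    apply (rule exI[of _ 1])
    apply (intro conjI)
      apply (simp add: algebra_simps)
     apply simp
    apply (intro allI impI)
    using ind by blast
qed

lemma iso_decode: assumes t: "transM M e"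
  shows "iso arith_sig arith_ar (arith_struct (decode M)) M"
  unfolding iso_def
proof (intro exI conjI ballI allI impI)
  show "bij e" using t by (simp add: transM_def)
  fix R and xs :: "nat list" assume R: "R \<in> arith_sig" and l: "length xs = arith_ar R"
  show "arith_struct (decode M) (R, xs) = M (R, map e xs)"
  proof -
    consider "R = 0" | "R = 1" | "R = 2" using R by (auto simp: arith_sig_def)
    then show ?thesis
    proof cases
      case 1
      then obtain a b c where "xs = [a,b,c]" using l
        by (auto simp: arith_ar_def length_Suc_conv numeral_3_eq_3)
      then show ?thesis using t 1 by (simp add: transM_def)
    next
      case 2
      then obtain a b c where "xs = [a,b,c]" using l
        by (auto simp: arith_ar_def length_Suc_conv numeral_3_eq_3)
      then show ?thesis using t 2 by (simp add: transM_def)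
    next
      case 3
      then obtain a where "xs = [a]" using l
        by (auto simp: arith_ar_def length_Suc_conv)
      then show ?thesis using t 3 by (simp add: decode_def trans_enum[OF t])
    qed
  qed
qed

lemma iso_decode_eq:
  assumes "iso arith_sig arith_ar M N" "transM M e" "transM N e'"
  shows "decode M = decode N"
proof -
  obtain \<pi> where p: "bij \<pi>" "\<forall>R\<in>arith_sig. \<forall>xs. length xs = arith_ar R \<longrightarrow> (M (R, xs) \<longleftrightarrow> N (R, map \<pi> xs))"
    using assms(1) unfolding iso_def by blast
  have 0: "M (0,xs) = N (0, map \<pi> xs)" if "length xs = 3" for xs
    using p(2) that by (auto simp: arith_sig_def arith_ar_def)
  have 1: "M (1,xs) = N (1, map \<pi> xs)" if "length xs = 3" for xs
    using p(2) that by (auto simp: arith_sig_def arith_ar_def)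
  have 2: "M (2,xs) = N (2, map \<pi> xs)" if "length xs = 1" for xs
    using p(2) that by (auto simp: arith_sig_def arith_ar_def)
  have "transM N (\<pi> \<circ> e)"
    unfolding transM_def
  proof (intro conjI allI)
    show "bij (\<pi> \<circ> e)" using p(1) assms(2) by (simp add: transM_def bij_comp)
    fix a b c
    show "N (0,[(\<pi> \<circ> e) a,(\<pi> \<circ> e) b,(\<pi> \<circ> e) c]) = (a+b=c)"
      using 0[of "[e a, e b, e c]"] assms(2) by (simp add: transM_def)
    show "N (1,[(\<pi> \<circ> e) a,(\<pi> \<circ> e) b,(\<pi> \<circ> e) c]) = (a*b=c)"
      using 1[of "[e a, e b, e c]"] assms(2) by (simp add: transM_def)
  qed
  then have "enum N = \<pi> \<circ> e" by (rule trans_enum)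
  moreover have "enum M = e" using assms(2) by (rule trans_enum)
  ultimately show ?thesis using 2 by (auto simp: fun_eq_iff decode_def)
qed


lemma zero_uniq: assumes t: "transM N e" and h: "N (0,[z,z,z])" shows "z = zero N"
proof -
  obtain k where "z = e k" using trans_ex[OF t] by blast
  with h t have "k = 0" by (simp add: transM_def)
  then show ?thesis using \<open>z = e k\<close> trans_zero[OF t] by simp
qed

lemma one_uniq: assumes t: "transM N e" and h: "N (1,[u,u,u])" "\<not> N (0,[u,u,u])" shows "u = one N"
proof -
  obtain k where "z = e k" if "z = u" for z using trans_ex[OF t] by blast
  then have k: "u = e k" by blast
  with h t have "k = 1" by (auto simp: transM_def)
  then show ?thesis using k trans_one[OF t] by simp
qed

lemma succ_uniq: assumes t: "transM N e" and h: "N (0,[a,one N,b])" shows "b = succ N a"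
proof -
  obtain k where k: "a = e k" using trans_ex[OF t] by blast
  obtain j where j: "b = e j" using trans_ex[OF t] by blast
  from h t k j have "k + 1 = j" by (simp add: transM_def trans_one[OF t])
  then show ?thesis using k j trans_succ[OF t] by simp
qed

definition Fset :: "code \<Rightarrow> nat \<Rightarrow> (nat \<times> nat list) set" where
  "Fset M n = {(0,[zero M,zero M,zero M]), (1,[one M,one M,one M]), (0,[one M,one M,one M]), (2,[enum M n])}
     \<union> (\<lambda>k. (0,[enum M k, one M, enum M (Suc k)])) ` {..<n}"

lemma finite_Fset: "finite (Fset M n)" by (simp add: Fset_def)

lemma agree_decode:
  assumes tM: "transM M e" and tN: "transM N e'" and ag: "\<forall>c\<in>Fset M n. N c = M c"
  shows "decode N n = decode M n"
proof -
  have M1: "M (0,[zero M,zero M,zero M])" using tM by (simp add: trans_zero transM_def)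
  have M2: "M (1,[one M,one M,one M])" "\<not> M (0,[one M,one M,one M])" using tM by (simp_all add: trans_one transM_def)
  have M3: "M (0,[enum M k, one M, enum M (Suc k)])" for k
    using tM by (simp add: trans_one trans_enum transM_def)
  have z: "zero N = zero M"
    using zero_uniq[OF tN, of "zero M"] M1 ag by (simp add: Fset_def)
  have o: "one N = one M"
    using one_uniq[OF tN, of "one M"] M2 ag by (simp add: Fset_def)
  have en: "k \<le> n \<Longrightarrow> enum N k = enum M k" for k
  proof (induction k)
    case 0 then show ?case using z by (simp add: enum_def)
  next
    case (Suc k)
    have "N (0,[enum M k, one N, enum M (Suc k)])"
      using M3[of k] ag Suc.prems o by (auto simp: Fset_def)
    then have "enum M (Suc k) = succ N (enum M k)" by (rule succ_uniq[OF tN])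
    moreover have "enum N (Suc k) = succ N (enum N k)" by (simp add: enum_def)
    ultimately show ?case using Suc by simp
  qed
  have "N (2,[enum M n]) = M (2,[enum M n])" using ag by (simp add: Fset_def)
  then show ?thesis using en[of n] by (simp add: decode_def)
qed

section \<open>Topology\<close>

lemma topspace_code_top[simp]: "topspace code_top = UNIV"
  by (simp add: code_top_def)

lemma topspace_cantor[simp]: "topspace cantor = UNIV"
  by (simp add: cantor_def)

lemma openin_coord: "openin code_top {N. N c = b}"
proof -
  have "continuous_map code_top (discrete_topology UNIV) (\<lambda>N. N c)"
    unfolding code_top_def by (rule continuous_map_product_projection) simp
  then have "openin code_top {N \<in> topspace code_top. N c \<in> {b}}"
    by (rule openin_continuous_map_preimage) simp
  then show ?thesis by simp
qed

lemma openin_agree: "finite F \<Longrightarrow> openin code_top {N. \<forall>c\<in>F. N c = M c}"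
proof (induction F rule: finite_induct)
  case empty
  then show ?case using openin_topspace[of code_top] by simp
next
  case (insert c F)
  have "{N. \<forall>c'\<in>insert c F. N c' = M c'} = {N. N c = M c} \<inter> {N. \<forall>c\<in>F. N c = M c}" by auto
  moreover have "openin code_top ({N. N c = M c} \<inter> {N. \<forall>c\<in>F. N c = M c})"
    by (rule openin_Int[OF openin_coord insert.IH])
  ultimately show ?case by simp
qed

lemma closed_structs: "closedin code_top {M. is_structure \<sigma> ar M}"
proof -
  let ?bad = "{c. \<not> (fst c \<in> \<sigma> \<and> length (snd c) = ar (fst c))}"
  have "UNIV - {M. is_structure \<sigma> ar M} = (\<Union>c\<in>?bad. {N. N c = True})"
    unfolding is_structure_def by auto blast+
  moreover have "openin code_top (\<Union>c\<in>?bad. {N. N c = True})"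
    using openin_coord by blast
  ultimately show ?thesis unfolding closedin_def by simp
qed

lemma compact_code_top: "compact_space code_top"
  unfolding code_top_def
  by (simp add: compact_space_product_topology compact_space_discrete_topology)

lemma Hausdorff_cantor: "Hausdorff_space cantor"
  unfolding cantor_def by (simp add: Hausdorff_space_product_topology)

lemma decode_cont:
  assumes P: "\<And>M. M \<in> P \<Longrightarrow> \<exists>e. transM M e"
  shows "continuous_map (subtopology code_top P) cantor decode"
  unfolding cantor_def continuous_map_componentwise_UNIV
proof
  fix n
  show "continuous_map (subtopology code_top P) (discrete_topology UNIV) (\<lambda>M. decode M n)"
    unfolding continuous_map_openin_preimage_eq
  proof (intro conjI allI impI)
    show "(\<lambda>M. decode M n) \<in> topspace (subtopology code_top P) \<rightarrow> topspace (discrete_topology UNIV)"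
      by simp
    fix U :: "bool set"
    show "openin (subtopology code_top P) (topspace (subtopology code_top P) \<inter> (\<lambda>M. decode M n) -` U)"
    proof (subst openin_subopen, intro ballI)
      fix M assume M: "M \<in> topspace (subtopology code_top P) \<inter> (\<lambda>M. decode M n) -` U"
      then have MP: "M \<in> P" by simp
      obtain e where e: "transM M e" using P[OF MP] by blast
      let ?T = "P \<inter> {N. \<forall>c\<in>Fset M n. N c = M c}"
      have "openin (subtopology code_top P) ?T"
        by (rule openin_subtopology_Int2, rule openin_agree, rule finite_Fset)
      moreover have "M \<in> ?T" using MP by simp
      moreover have "?T \<subseteq> topspace (subtopology code_top P) \<inter> (\<lambda>M. decode M n) -` U"
      proof
        fix N assume N: "N \<in> ?T"
        then obtain e' where e': "transM N e'" using P by blast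
        have "decode N n = decode M n" using agree_decode[OF e e'] N by blast
        then show "N \<in> topspace (subtopology code_top P) \<inter> (\<lambda>M. decode M n) -` U" using N M by simp
      qed
      ultimately show "\<exists>T. openin (subtopology code_top P) T \<and> M \<in> T \<and>
          T \<subseteq> topspace (subtopology code_top P) \<inter> (\<lambda>M. decode M n) -` U" by blast
    qed
  qed
qed


lemma iso_refl: "iso \<sigma> ar M M"
  unfolding iso_def by (intro exI[of _ id]) simp

lemma iso_join:
  assumes "iso \<sigma> ar X M" "iso \<sigma> ar X N" shows "iso \<sigma> ar M N"
proof -
  obtain p where p: "bij p" "\<forall>R\<in>\<sigma>. \<forall>xs. length xs = ar R \<longrightarrow> (X (R, xs) \<longleftrightarrow> M (R, map p xs))"
    using assms(1) unfolding iso_def by blast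
  obtain q where q: "bij q" "\<forall>R\<in>\<sigma>. \<forall>xs. length xs = ar R \<longrightarrow> (X (R, xs) \<longleftrightarrow> N (R, map q xs))"
    using assms(2) unfolding iso_def by blast
  have "bij (q \<circ> inv p)" using p(1) q(1) by (simp add: bij_comp bij_imp_bij_inv)
  moreover have "M (R, xs) \<longleftrightarrow> N (R, map (q \<circ> inv p) xs)" if "R \<in> \<sigma>" "length xs = ar R" for R xs
  proof -
    let ?ys = "map (inv p) xs"
    have "map p ?ys = xs" using p(1) by (simp add: comp_def bij_is_surj surj_f_inv_f)
    moreover have "length ?ys = ar R" using that by simp
    ultimately show ?thesis using p(2) q(2) that by (metis map_map)
  qed
  ultimately show ?thesis unfolding iso_def by blast
qed

theorem lemma1p12:
  assumes "SO_Absolute_Morley"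
  shows "\<forall>A. lightface_projective A \<longrightarrow>
           at_most_aleph1 A \<or> (\<exists>P \<subseteq> A. perfect_in cantor P)"
proof (intro allI impI)
  fix A assume "lightface_projective A"
  then obtain \<phi> where s\<phi>: "sentence \<phi>" and w\<phi>: "wf_sof arith_sig arith_ar \<phi>"
    and A: "A = {x. models (arith_struct x) \<phi>}" unfolding lightface_projective_def by blast
  define T where "T = {theta, \<phi>}"
  let ?Mods = "Mods arith_sig arith_ar T"
  have sot: "second_order_theory arith_sig arith_ar T"
    using s\<phi> w\<phi> theta_sentence theta_wf by (simp add: T_def second_order_theory_def)
  have modsD: "\<exists>e. transM M e" "models M \<phi>" if "M \<in> ?Mods" for M
    using that theta_trans by (auto simp: Mods_def T_def)
  have arith_mods: "arith_struct x \<in> ?Mods" if "x \<in> A" for x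
  proof -
    have "is_structure arith_sig arith_ar (arith_struct x)"
      unfolding is_structure_def
    proof (intro allI impI)
      fix R xs assume "arith_struct x (R, xs)"
      then show "R \<in> arith_sig \<and> length xs = arith_ar R"
        by (auto simp: arith_sig_def arith_ar_def split: if_splits list.splits)
    qed
    then show ?thesis using that arith_theta A by (simp add: Mods_def T_def)
  qed
  have iso_arith: "iso arith_sig arith_ar (arith_struct (decode M)) M" if "M \<in> ?Mods" for M
    using modsD(1)[OF that] iso_decode by blast
  have decA: "decode M \<in> A" if MM: "M \<in> ?Mods" for M
  proof -
    obtain e where "bij e" and h: "\<forall>R\<in>arith_sig. \<forall>xs. length xs = arith_ar R \<longrightarrow>
        (arith_struct (decode M) (R, xs) \<longleftrightarrow> M (R, map e xs))"
      using iso_arith[OF MM] unfolding iso_def by blast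
    have "models (arith_struct (decode M)) \<phi> = models M \<phi>"
      by (rule models_iso[OF \<open>bij e\<close> _ w\<phi> s\<phi>]) (use h in blast)
    then show ?thesis using modsD(2)[OF MM] A by simp
  qed
  have arith_inj: "x = y" if "iso arith_sig arith_ar (arith_struct x) (arith_struct y)" for x y
    using iso_decode_eq[OF that arith_trans arith_trans] decode_arith by simp
  from assms sot have
    "at_most_aleph1 (?Mods // iso_rel arith_sig arith_ar)
     \<or> (\<exists>P \<subseteq> ?Mods. perfect_in (code_space arith_sig arith_ar) P \<and>
          (\<forall>M\<in>P. \<forall>N\<in>P. M \<noteq> N \<longrightarrow> \<not> iso arith_sig arith_ar M N))"
    unfolding SO_Absolute_Morley_def by blast
  then show "at_most_aleph1 A \<or> (\<exists>P \<subseteq> A. perfect_in cantor P)"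
  proof
    assume small: "at_most_aleph1 (?Mods // iso_rel arith_sig arith_ar)"
    define f where "f x = iso_rel arith_sig arith_ar `` {arith_struct x}" for x
    have "inj_on f A"
    proof (rule inj_onI)
      fix x y assume "x \<in> A" "y \<in> A" "f x = f y"
      have "arith_struct y \<in> f y" by (simp add: f_def iso_rel_def iso_refl)
      then have "arith_struct y \<in> f x" using \<open>f x = f y\<close> by simp
      then have "iso arith_sig arith_ar (arith_struct x) (arith_struct y)" by (simp add: f_def iso_rel_def)
      then show "x = y" by (rule arith_inj)
    qed
    moreover have "f ` A \<subseteq> ?Mods // iso_rel arith_sig arith_ar"
      using arith_mods unfolding f_def by (auto intro: quotientI)
    ultimately have "ordLeq3 (card_of A) (card_of (?Mods // iso_rel arith_sig arith_ar))"
      using card_of_ordLeq by blast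
    then show ?thesis using small unfolding at_most_aleph1_def using ordLeq_transitive by blast
  next
    assume "\<exists>P \<subseteq> ?Mods. perfect_in (code_space arith_sig arith_ar) P \<and>
          (\<forall>M\<in>P. \<forall>N\<in>P. M \<noteq> N \<longrightarrow> \<not> iso arith_sig arith_ar M N)"
    then obtain P where PM: "P \<subseteq> ?Mods" and perf: "perfect_in (code_space arith_sig arith_ar) P"
      and niso: "\<forall>M\<in>P. \<forall>N\<in>P. M \<noteq> N \<longrightarrow> \<not> iso arith_sig arith_ar M N" by blast
    let ?S = "{M. is_structure arith_sig arith_ar M}"
    let ?Q = "decode ` P"
    have QA: "?Q \<subseteq> A" using PM decA by blast
    have inj: "inj_on decode P"
    proof (rule inj_onI)
      fix M N assume M: "M \<in> P" and N: "N \<in> P" and eq: "decode M = decode N"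
      have MM: "M \<in> ?Mods" and NN: "N \<in> ?Mods" using M N PM by auto
      have "iso arith_sig arith_ar (arith_struct (decode M)) N"
        using iso_arith[OF NN] eq by simp
      then have "iso arith_sig arith_ar M N"
        by (rule iso_join[OF iso_arith[OF MM]])
      then show "M = N" using niso M N by blast
    qed
    have cont: "continuous_map (subtopology code_top P) cantor decode"
      by (rule decode_cont) (use PM modsD in blast)
    have Pne: "P \<noteq> {}" and Pcl: "closedin (code_space arith_sig arith_ar) P"
      and Pder: "P \<subseteq> code_space arith_sig arith_ar derived_set_of P"
      using perf unfolding perfect_in_def by auto
    have "closedin code_top P"
      using Pcl closed_structs unfolding code_space_def by (rule closedin_trans_full)
    then have "compactin code_top P" by (rule closedin_compact_space[OF compact_code_top])
    then have "compactin (subtopology code_top P) P" by (simp add: compactin_subtopology)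
    then have "compactin cantor ?Q" using cont by (rule image_compactin)
    then have Qcl: "closedin cantor ?Q" by (rule compactin_imp_closedin[OF Hausdorff_cantor])
    have Qder: "?Q \<subseteq> cantor derived_set_of ?Q"
    proof
      fix y assume "y \<in> ?Q"
      then obtain M where MP: "M \<in> P" and y: "y = decode M" by blast
      show "y \<in> cantor derived_set_of ?Q"
        unfolding in_derived_set_of
      proof (intro conjI allI impI)
        show "y \<in> topspace cantor" by simp
        fix U assume U: "y \<in> U \<and> openin cantor U"
        have "openin (subtopology code_top P) {N \<in> topspace (subtopology code_top P). decode N \<in> U}"
          using cont U by (blast intro: openin_continuous_map_preimage)
        then obtain G where G: "openin code_top G" and GP: "{N \<in> P. decode N \<in> U} = G \<inter> P"
          unfolding openin_subtopology by auto
        have MG: "M \<in> G" using GP MP U y by blast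
        have O: "openin (code_space arith_sig arith_ar) (G \<inter> ?S)"
          unfolding code_space_def using G by (rule openin_subtopology_Int)
        have MS: "M \<in> G \<inter> ?S" using MP PM MG by (auto simp add: Mods_def)
        have D: "M \<in> code_space arith_sig arith_ar derived_set_of P" using Pder MP by blast
        then have "\<forall>T. M \<in> T \<and> openin (code_space arith_sig arith_ar) T \<longrightarrow> (\<exists>y. y \<noteq> M \<and> y \<in> P \<and> y \<in> T)"
          unfolding in_derived_set_of by (rule conjunct2)
        then have "M \<in> G \<inter> ?S \<and> openin (code_space arith_sig arith_ar) (G \<inter> ?S) \<longrightarrow> (\<exists>y. y \<noteq> M \<and> y \<in> P \<and> y \<in> G \<inter> ?S)"
          by (rule spec)
        then have "\<exists>y. y \<noteq> M \<and> y \<in> P \<and> y \<in> G \<inter> ?S" using MS O by blast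
        then obtain M' where M': "M' \<noteq> M" "M' \<in> P" "M' \<in> G \<inter> ?S" by blast
        have "decode M' \<in> U" using GP M' by blast
        moreover have "decode M' \<noteq> y" using inj M' MP y by (metis inj_on_eq_iff)
        ultimately show "\<exists>y'. y' \<noteq> y \<and> y' \<in> ?Q \<and> y' \<in> U" using M' by blast
      qed
    qed
    have "perfect_in cantor ?Q" unfolding perfect_in_def using Pne Qcl Qder by blast
    then show ?thesis using QA by blast
  qed
qed

end
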